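(* Let $g\ge1$, $n=g+1$, $B\in\mathbb Z^{g\times n}$ with $B_{i,1}=1$, $B_{i,i+1}=-1$ and other entries $0$, and $Q=BB^T$. Let $k\in\{1,\dots,g\}$ and $\mathbf a\in[\mathbf k]$. Then the polytope $B^T(D_{\mathbf a,Q})$ (the convex hull of $\{B^T\mathbf c:\mathbf c\in\mathcal D_{\mathbf a,Q}\}$) is combinatorially equivalent to the hypersimplex $\Delta_{k,n}$.
   Context: $V_Q=\{\mathbf a\in\mathbb R^g:\ \mathbf a^TQ\mathbf a\le(\mathbf a-\mathbf c)^TQ(\mathbf a-\mathbf c)\ \forall\mathbf c\in\mathbb Z^g\}$; for $k=1,\dots,g$, $[\mathbf k]\subset\mathbb R^g$ is the set of vectors with entries in $\{-\tfrac{k}{g+1},\tfrac{g+1-k}{g+1}\}$ having either $k$ or $k-1$ entries equal to $\tfrac{g+1-k}{g+1}$; these are vertices of $V_Q$. For a vertex $\mathbf a$, $\mathcal D_{\mathbf a,Q}=\{\mathbf c\in\mathbb Z^g:\ \mathbf a^TQ\mathbf a=(\mathbf a-\mathbf c)^TQ(\mathbf a-\mathbf c)\}$ and $D_{\mathbf a,Q}$ is its convex hull. The hypersimplex is $\Delta_{k,n}=\mathrm{Conv}\{\sum_{i\in I}\mathbf e_i: I\subset[n],|I|=k\}\subset\mathbb R^n$. *)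

theory Defs
  imports "HOL-Analysis.Analysis"
begin

definition comb_equiv :: "'a::real_vector set \<Rightarrow> 'b::real_vector set \<Rightarrow> bool" where
  "comb_equiv P R \<longleftrightarrow>
     (\<exists>f. bij_betw f {F. F face_of P} {G. G face_of R} \<and>
          (\<forall>F1 F2. F1 face_of P \<longrightarrow> F2 face_of P \<longrightarrow> (F1 \<subseteq> F2 \<longleftrightarrow> f F1 \<subseteq> f F2)))"

text \<open>The matrix B in Z^{g x n}, n = g+1. Rows indexed by 'g, columns by 'g option:
  column None is the first column, column Some i is column i+1.\<close>
definition Bmat :: "real ^ ('g::finite option) ^ 'g" where
  "Bmat = (\<chi> i j. if j = None then 1 else if j = Some i then -1 else 0)"

definition Qmat :: "real ^ 'g ^ ('g::finite)" where
  "Qmat = Bmat ** transpose Bmat"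

definition qform :: "real ^ 'g ^ 'g \<Rightarrow> real ^ ('g::finite) \<Rightarrow> real" where
  "qform Q x = x \<bullet> (Q *v x)"

definition bracket :: "nat \<Rightarrow> (real ^ ('g::finite)) set" where
  "bracket k = {a. (\<forall>i. a $ i \<in> {- real k / real (CARD('g) + 1),
                                   (real (CARD('g) + 1) - real k) / real (CARD('g) + 1)}) \<and>
       card {i. a $ i = (real (CARD('g) + 1) - real k) / real (CARD('g) + 1)} \<in> {k, k - 1}}"

definition Dset :: "real ^ ('g::finite) \<Rightarrow> real ^ 'g ^ 'g \<Rightarrow> (real ^ 'g) set" where
  "Dset a Q = {c. (\<forall>i. c $ i \<in> \<int>) \<and> qform Q a = qform Q (a - c)}"

definition hypersimplex :: "nat \<Rightarrow> (real ^ ('n::finite)) set" where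
  "hypersimplex k = convex hull {(\<chi> i. if i \<in> I then 1 else 0) | I. card I = k}"

end

theory Submission
  imports Defs
begin


lemma ind_sum: "(\<Sum>j\<in>UNIV. if j\<in>T then 1 else 0) = real (card (T::'a::finite set))"
  by (simp add: sum.If_cases)

lemma sum_opt: "sum f (UNIV :: 'a::finite option set) = f None + sum (\<lambda>i. f (Some i)) UNIV"
proof -
  have U: "(UNIV :: 'a option set) = insert None (range Some)" by (auto intro: option.exhaust)
  have "sum f (UNIV :: 'a option set) = sum f (insert None (range Some))" by (subst U) simp
  also have "\<dots> = f None + sum f (range Some)" by simp
  also have "sum f (range Some) = sum (\<lambda>i. f (Some i)) (UNIV :: 'a set)"
    by (simp add: sum.reindex)
  finally show ?thesis .
qed

lemma BT_None: "(transpose (Bmat :: real ^ ('g::finite option) ^ 'g) *v c) $ None = sum (\<lambda>i. c $ i) UNIV"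
  by (simp add: Bmat_def matrix_vector_mult_def transpose_def)

lemma BT_Some: "(transpose (Bmat :: real ^ ('g::finite option) ^ 'g) *v c) $ Some j = - c $ j"
proof -
  have "(transpose (Bmat :: real ^ ('g::finite option) ^ 'g) *v c) $ Some j
      = (\<Sum>i\<in>UNIV. (if j = i then -1 else 0) * c $ i)"
    by (simp add: Bmat_def matrix_vector_mult_def transpose_def)
  also have "\<dots> = (\<Sum>i\<in>UNIV. if j = i then - c $ i else 0)" by (rule sum.cong) auto
  also have "\<dots> = - c $ j" by simp
  finally show ?thesis .
qed

lemma BT_sum: "sum (\<lambda>j. (transpose (Bmat :: real ^ ('g::finite option) ^ 'g) *v c) $ j) UNIV = 0"
  unfolding sum_opt BT_None BT_Some by (simp add: sum_negf)

lemma qform_eq: "qform (Qmat :: real^'g^'g) x = (transpose (Bmat :: real ^ ('g::finite option) ^ 'g) *v x) \<bullet> (transpose Bmat *v x)"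
proof -
  have "qform (Qmat :: real^'g^'g) x = x \<bullet> (Bmat *v (transpose Bmat *v x))"
    unfolding qform_def Qmat_def matrix_vector_mul_assoc ..
  also have "\<dots> = (x v* Bmat) \<bullet> (transpose Bmat *v x)" by (simp add: dot_lmul_matrix)
  finally show ?thesis by (simp add: transpose_matrix_vector)
qed

lemma int_sq_ge: assumes "(w::real) \<in> \<int>" shows "w \<le> w^2"
proof -
  obtain m where "w = of_int m" using assms Ints_cases by blast
  moreover have "m \<le> m^2" proof (cases "m \<le> 0")
    case True then show ?thesis by (smt (verit) zero_le_power2)
  next
    case False then show ?thesis by (simp add: power2_eq_square)
  qed
  ultimately show ?thesis by (metis of_int_le_iff of_int_power)
qed

lemma ident:
  fixes y z :: "real ^ 'n::finite" and S :: "'n set"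
  assumes y: "y = (\<chi> j. q - (if j\<in>S then 1 else 0))" and z0: "sum (\<lambda>j. z$j) UNIV = 0"
  shows "(y-z)\<bullet>(y-z) - y\<bullet>y = (\<Sum>j\<in>UNIV. (z$j + (if j\<in>S then 1 else 0))^2 - (z$j + (if j\<in>S then 1 else 0)))"
proof -
  have "(y-z)\<bullet>(y-z) - y\<bullet>y = (\<Sum>j\<in>UNIV. (z$j + (if j\<in>S then 1 else 0))^2 - (z$j + (if j\<in>S then 1 else 0)) - 2*q*z$j + z$j)"
    unfolding inner_vec_def sum_subtractf[symmetric] 
    by (rule sum.cong) (auto simp: y power2_eq_square algebra_simps)
  also have "\<dots> = (\<Sum>j\<in>UNIV. (z$j + (if j\<in>S then 1 else 0))^2 - (z$j + (if j\<in>S then 1 else 0))) - 2*q*(\<Sum>j\<in>UNIV. z$j) + (\<Sum>j\<in>UNIV. z$j)"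
    by (simp add: sum.distrib sum_subtractf sum_distrib_left sum_negf)
  finally show ?thesis using z0 by (simp add: sum_negf)
qed

lemma keyD:
  fixes y :: "real ^ 'n::finite" and S :: "'n set"
  assumes y: "y = (\<chi> j. q - (if j\<in>S then 1 else 0))" and cS: "card S = k"
  shows "{z. (\<forall>j. z$j \<in> \<int>) \<and> sum (\<lambda>j. z$j) UNIV = 0 \<and> y\<bullet>y = (y-z)\<bullet>(y-z)}
       = {(\<chi> j. (if j\<in>T then 1 else 0) - (if j\<in>S then 1 else 0)) | T. card T = k}"
proof (intro set_eqI iffI)
  fix z assume "z \<in> {z. (\<forall>j. z$j \<in> \<int>) \<and> sum (\<lambda>j. z$j) UNIV = 0 \<and> y\<bullet>y = (y-z)\<bullet>(y-z)}"
  then have zi: "\<And>j. z$j \<in> \<int>" and z0: "sum (\<lambda>j. z$j) UNIV = 0" and e: "y\<bullet>y = (y-z)\<bullet>(y-z)" by auto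
  define w where "w j = z$j + (if j\<in>S then 1 else 0)" for j
  have wi: "w j \<in> \<int>" for j using zi[of j] by (simp add: w_def)
  have "(\<Sum>j\<in>UNIV. (w j)^2 - w j) = 0" using ident[OF y z0] e by (simp add: w_def)
  moreover have "\<forall>j\<in>UNIV. 0 \<le> (w j)^2 - w j" using int_sq_ge[OF wi] by simp
  ultimately have "\<forall>j\<in>UNIV. (w j)^2 - w j = 0" using sum_nonneg_eq_0_iff[of UNIV "\<lambda>j. (w j)^2 - w j"] by simp
  then have w01: "w j = 0 \<or> w j = 1" for j
  proof -
    have "w j * (w j - 1) = 0" using \<open>\<forall>j\<in>UNIV. (w j)^2 - w j = 0\<close> by (simp add: power2_eq_square algebra_simps)
    then show ?thesis by simp
  qed
  define T where "T = {j. w j = 1}"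
  have wT: "w j = (if j\<in>T then 1 else 0)" for j using w01[of j] by (auto simp: T_def)
  have zT: "z = (\<chi> j. (if j\<in>T then 1 else 0) - (if j\<in>S then 1 else 0))"
  proof (subst vec_eq_iff, intro allI)
    fix i show "z $ i = (\<chi> j. (if j\<in>T then 1 else 0) - (if j\<in>S then 1 else 0)) $ i"
      using wT[of i] unfolding w_def by simp
  qed
  have "real (card T) = (\<Sum>j\<in>UNIV. w j)" by (simp add: wT ind_sum)
  also have "\<dots> = (\<Sum>j\<in>UNIV. z$j) + (\<Sum>j\<in>UNIV. (if j\<in>S then 1 else 0))" by (simp add: w_def sum.distrib)
  also have "\<dots> = real k" using z0 cS by (simp add: ind_sum)
  finally have "card T = k" by simp
  then show "z \<in> {(\<chi> j. (if j\<in>T then 1 else 0) - (if j\<in>S then 1 else 0)) | T. card T = k}"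
    using zT by blast
next
  fix z :: "real^'n" assume "z \<in> {(\<chi> j. (if j\<in>T then 1 else 0) - (if j\<in>S then 1 else 0)) | T. card T = k}"
  then obtain T where zT: "z = (\<chi> j. (if j\<in>T then 1 else 0) - (if j\<in>S then 1 else 0))" and cT: "card T = k" by blast
  have zi: "\<forall>j. z$j \<in> \<int>" by (simp add: zT)
  have z0: "sum (\<lambda>j. z$j) UNIV = 0" using cT cS by (simp add: zT sum_subtractf ind_sum)
  have "(y-z)\<bullet>(y-z) - y\<bullet>y = (\<Sum>j\<in>UNIV. (z$j + (if j\<in>S then 1 else 0))^2 - (z$j + (if j\<in>S then 1 else 0)))"
    by (rule ident[OF y z0])
  also have "\<dots> = 0" by (rule sum.neutral) (simp add: zT)
  finally show "z \<in> {z. (\<forall>j. z$j \<in> \<int>) \<and> sum (\<lambda>j. z$j) UNIV = 0 \<and> y\<bullet>y = (y-z)\<bullet>(y-z)}"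
    using zi z0 by simp
qed


lemma tr_inv: "(+) (v::'a::real_vector) ` ((+) (-v) ` F) = F" "(+) (-v) ` ((+) (v::'a::real_vector) ` F) = F"
  by (auto simp: image_image)

lemma comb_equiv_transl: "comb_equiv ((+) v ` P) (P :: 'a::real_vector set)"
  unfolding comb_equiv_def
proof (intro exI conjI allI impI)
  show "bij_betw (image ((+) (-v))) {F. F face_of (+) v ` P} {G. G face_of P}"
  proof (rule bij_betwI[where g = "image ((+) v)"])
    show "image ((+) (-v)) \<in> {F. F face_of (+) v ` P} \<rightarrow> {G. G face_of P}"
      by (metis (mono_tags, lifting) Pi_I face_of_translation_eq mem_Collect_eq tr_inv(1))
    show "image ((+) v) \<in> {G. G face_of P} \<rightarrow> {F. F face_of (+) v ` P}"
      by (simp add: face_of_translation_eq)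
  qed (simp_all only: tr_inv)
next
  fix F1 F2 :: "'a set"
  show "(F1 \<subseteq> F2) = ((+) (- v) ` F1 \<subseteq> (+) (- v) ` F2)"
    by (metis image_mono tr_inv(1))
qed

lemma card_opt: "CARD('a::finite option) = Suc CARD('a)" by simp
declare transpose_matrix_vector[simp del]

theorem theorem3p5:
  fixes k :: nat and a :: "real ^ ('g::finite)"
  assumes "1 \<le> k" and "k \<le> CARD('g)"
    and "a \<in> bracket k"
  shows "comb_equiv
           (convex hull ((\<lambda>c. transpose Bmat *v c) ` Dset a (Qmat :: real ^ 'g ^ 'g)))
           (hypersimplex k :: (real ^ ('g option)) set)"
proof -
  define N where "N = real (CARD('g) + 1)"
  define q where "q = real k / N"
  define p where "p = (N - real k) / N"
  have Npos: "N > 0" by (simp add: N_def)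
  have pq: "p = 1 - q" using Npos by (simp add: p_def q_def field_simps)
  define A where "A = {i. a $ i = p}"
  have ai: "\<And>i. a $ i = p \<or> a $ i = - q" and cA: "card A = k \<or> card A = k - 1"
    using assms(3) unfolding bracket_def A_def p_def q_def N_def by auto
  define L where "L = (\<lambda>c::real^'g. transpose (Bmat :: real ^ ('g option) ^ 'g) *v c)"
  define y where "y = L a"
  have ySome: "y $ Some i = q \<or> y $ Some i = q - 1" for i
    using ai[of i] by (auto simp: y_def L_def BT_Some pq)
  have "sum (\<lambda>i. a $ i) UNIV = (\<Sum>i\<in>UNIV. if i \<in> A then p else - q)"
    by (rule sum.cong) (use ai in \<open>auto simp: A_def\<close>)
  also have "\<dots> = real (card A) * p - real (CARD('g) - card A) * q"
    by (simp add: sum.If_cases Compl_eq_Diff_UNIV card_Diff_subset)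
  finally have sa: "sum (\<lambda>i. a $ i) UNIV = real (card A) * p - (real CARD('g) - real (card A)) * q"
    by (simp add: card_mono of_nat_diff)
  have yNone: "y $ None = q \<or> y $ None = q - 1"
  proof -
    have yN: "y $ None = real (card A) * p - (real CARD('g) - real (card A)) * q"
      using sa by (simp add: y_def L_def BT_None)
    have NG: "real CARD('g) = N - 1" by (simp add: N_def)
    show ?thesis
    proof (cases "card A = k")
      case True
      then have "y $ None = q" unfolding yN NG using Npos by (simp add: p_def q_def field_simps)
      then show ?thesis ..
    next
      case False
      then have "card A = k - 1" using cA by simp
      then have rA: "real (card A) = real k - 1" using assms(1) by simp
      have "y $ None = q - 1" unfolding yN NG rA using Npos by (simp add: p_def q_def field_simps)
      then show ?thesis ..
    qed
  qed
  have yall: "y $ j = q \<or> y $ j = q - 1" for j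
    using ySome yNone by (cases j) auto
  define S where "S = {j. y $ j = q - 1}"
  have yS: "y = (\<chi> j. q - (if j \<in> S then 1 else 0))"
    using yall by (auto simp: vec_eq_iff S_def)
  have "0 = sum (\<lambda>j. y $ j) UNIV" by (simp add: y_def L_def BT_sum)
  also have "\<dots> = (\<Sum>j\<in>UNIV. q - (if j \<in> S then 1 else 0))" by (simp add: yS)
  also have "\<dots> = N * q - real (card S)" by (simp add: sum_subtractf ind_sum N_def)
  also have "N * q = real k" using Npos by (simp add: q_def)
  finally have cS: "card S = k" by simp
  have img: "L ` Dset a (Qmat :: real ^ 'g ^ 'g) = {z. (\<forall>j. z$j \<in> \<int>) \<and> sum (\<lambda>j. z$j) UNIV = 0 \<and> y\<bullet>y = (y-z)\<bullet>(y-z)}"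
  proof (intro set_eqI iffI)
    fix z assume "z \<in> L ` Dset a (Qmat :: real ^ 'g ^ 'g)"
    then obtain c where z: "z = L c" and ci: "\<forall>i. c $ i \<in> \<int>" and e: "qform (Qmat :: real ^ 'g ^ 'g) a = qform Qmat (a - c)"
      by (auto simp: Dset_def)
    have "z $ j \<in> \<int>" for j
    proof (cases j)
      case None then show ?thesis using ci by (simp add: z L_def BT_None Ints_sum)
    next
      case (Some i) then show ?thesis using ci by (simp add: z L_def BT_Some)
    qed
    moreover have "sum (\<lambda>j. z$j) UNIV = 0" by (simp add: z L_def BT_sum)
    moreover have "y\<bullet>y = (y-z)\<bullet>(y-z)" using e
      by (simp add: qform_eq y_def z L_def matrix_vector_mult_diff_distrib)
    ultimately show "z \<in> {z. (\<forall>j. z$j \<in> \<int>) \<and> sum (\<lambda>j. z$j) UNIV = 0 \<and> y\<bullet>y = (y-z)\<bullet>(y-z)}" by simp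
  next
    fix z assume "z \<in> {z. (\<forall>j. z$j \<in> \<int>) \<and> sum (\<lambda>j. z$j) UNIV = 0 \<and> y\<bullet>y = (y-z)\<bullet>(y-z)}"
    then have zi: "\<And>j. z$j \<in> \<int>" and z0: "sum (\<lambda>j. z$j) UNIV = 0" and e: "y\<bullet>y = (y-z)\<bullet>(y-z)" by auto
    define c where "c = (\<chi> i. - z $ Some i)"
    have Lc: "L c = z"
    proof (subst vec_eq_iff, intro allI)
      fix j show "L c $ j = z $ j"
      proof (cases j)
        case None
        have "z $ None + (\<Sum>i\<in>UNIV. z $ Some i) = 0" using z0 by (simp add: sum_opt)
        then show ?thesis using None by (simp add: L_def BT_None c_def sum_negf)
      next
        case (Some i) then show ?thesis by (simp add: L_def BT_Some c_def)
      qed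
    qed
    have "c \<in> Dset a (Qmat :: real ^ 'g ^ 'g)"
      using zi e Lc by (simp add: Dset_def c_def qform_eq y_def L_def matrix_vector_mult_diff_distrib)
    then show "z \<in> L ` Dset a (Qmat :: real ^ 'g ^ 'g)" using Lc by (metis image_eqI)
  qed
  define eS where "eS = (\<chi> j. (if j \<in> S then 1 else 0 :: real))"
  have img2: "L ` Dset a (Qmat :: real ^ 'g ^ 'g) = (+) (- eS) ` {(\<chi> i. if i \<in> I then 1 else 0) | I. card I = k}"
  proof -
    have tr: "(\<chi> j. (if j\<in>T then 1 else 0) - (if j\<in>S then 1 else 0)) = - eS + (\<chi> i. if i \<in> T then 1 else 0)" for T
      by (simp add: vec_eq_iff eS_def)
    show ?thesis unfolding img keyD[OF yS cS] tr by blast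
  qed
  show ?thesis
    unfolding L_def[symmetric] img2 convex_hull_translation hypersimplex_def
    by (rule comb_equiv_transl)
qed

end
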